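(* Let $\mathbf{L}$ be a real symmetric $N\times N$ matrix with $\|\mathbf{L}\|\le \varrho$, with orthonormal eigenvectors $\boldsymbol{\phi}_1,\dots,\boldsymbol{\phi}_N$ and eigenvalues $\lambda_1,\dots,\lambda_N$. Let $\psi\neq 0,\varphi,c\in\mathbb{C}$, let $\mathbf{x}\in\mathbb{C}^N$ be a fixed input, and consider the ARMA$_1$ recursion $$\mathbf{y}_{t+1}=\psi\mathbf{L}\mathbf{y}_t+\varphi\mathbf{x},\qquad \mathbf{z}_{t+1}=\mathbf{y}_{t+1}+c\,\mathbf{x},$$ with arbitrary initial condition $\mathbf{y}_0$. Set $r=-\varphi/\psi$ and $p=1/\psi$. Then the frequency response of this recursion is $$H(\lambda)=c+\frac{r}{\lambda-p},\qquad\text{subject to } |p|>\varrho,$$ that is, when $|p|>\varrho$, $\mathbf{z}_t$ converges, linearly and irrespective of $\mathbf{y}_0$ and of $\mathbf{L}$, to $\sum_{n=1}^N H(\lambda_n)\langle \mathbf{x},\boldsymbol{\phi}_n\rangle\boldsymbol{\phi}_n$.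
   Context: $\mathbf{L}$ is a graph representation matrix (e.g. a possibly shifted Laplacian) of an undirected graph: symmetric and local ($L_{ij}=0$ for $i\neq j$ non-adjacent). All matrices $\mathbf{L}$ considered have eigenvalues in $[\lambda_{\min},\lambda_{\max}]$ and $\varrho=\max\{|\lambda_{\min}|,|\lambda_{\max}|\}$ bounds their spectral norm. The frequency response $H$ of a recursion is the function such that the steady-state output equals $\sum_n H(\lambda_n)\langle\mathbf{x},\boldsymbol{\phi}_n\rangle\boldsymbol{\phi}_n$. Linear convergence means convergence to the limit exponentially fast in $t$. *)

theory Defs
  imports "HOL-Analysis.Analysis"
begin

definition cmatvec :: "real^'n^'m \<Rightarrow> complex^'n \<Rightarrow> complex^'m" where
  "cmatvec L v = (\<chi> i. \<Sum>j\<in>UNIV. complex_of_real (L$i$j) * v$j)"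

definition cinner_real :: "complex^'n \<Rightarrow> real^'n \<Rightarrow> complex" where
  "cinner_real x phi = (\<Sum>i\<in>UNIV. x$i * cnj (complex_of_real (phi$i)))"

definition cvec :: "real^'n \<Rightarrow> complex^'n" where
  "cvec v = (\<chi> i. complex_of_real (v$i))"

definition arma1_H :: "complex \<Rightarrow> complex \<Rightarrow> complex \<Rightarrow> real \<Rightarrow> complex" where
  "arma1_H c r p lam = c + r / (complex_of_real lam - p)"

end

theory Submission
  imports Defs
begin

lemma orth_complete:
  fixes phi :: "'n \<Rightarrow> real^'n"
  assumes orthonormal: "\<And>i j. phi i \<bullet> phi j = (if i = j then 1 else 0)"
  shows "(\<Sum>n\<in>UNIV. phi n $ i * phi n $ j) = (if i = j then 1 else 0)"
proof -
  define P :: "real^'n^'n" where "P = (\<chi> n i. phi n $ i)"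
  have "P ** transpose P = mat 1"
    using orthonormal
    by (simp add: P_def matrix_matrix_mult_def transpose_def mat_def vec_eq_iff inner_vec_def)
  hence "transpose P ** P = mat 1" using matrix_left_right_inverse by blast
  hence "(transpose P ** P) $ i $ j = mat 1 $ i $ j" by simp
  thus ?thesis by (simp add: P_def matrix_matrix_mult_def transpose_def mat_def)
qed

lemma recon:
  fixes phi :: "'n \<Rightarrow> real^'n" and v :: "complex^'n"
  assumes orthonormal: "\<And>i j. phi i \<bullet> phi j = (if i = j then 1 else 0)"
  shows "v = (\<Sum>n\<in>UNIV. cinner_real v (phi n) *s cvec (phi n))"
proof (subst vec_eq_iff, rule allI)
  fix k
  have "(\<Sum>n\<in>UNIV. cinner_real v (phi n) *s cvec (phi n)) $ k
      = (\<Sum>n\<in>UNIV. \<Sum>i\<in>UNIV. v$i * complex_of_real (phi n $ i * phi n $ k))"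
    by (simp add: cinner_real_def cvec_def sum_distrib_right mult.assoc)
  also have "\<dots> = (\<Sum>i\<in>UNIV. v$i * complex_of_real (\<Sum>n\<in>UNIV. phi n $ i * phi n $ k))"
    by (subst sum.swap) (simp add: sum_distrib_left)
  also have "\<dots> = (\<Sum>i\<in>UNIV. if i = k then v$i else 0)"
    by (rule sum.cong) (simp_all add: orth_complete[OF orthonormal])
  also have "\<dots> = v $ k" by simp
  finally show "v $ k = (\<Sum>n\<in>UNIV. cinner_real v (phi n) *s cvec (phi n)) $ k" by simp
qed

lemma coef_L:
  fixes L :: "real^'n^'n" and v :: "complex^'n"
  assumes symm: "transpose L = L" and eigen: "L *v p = l *\<^sub>R p"
  shows "cinner_real (cmatvec L v) p = l * cinner_real v p"
proof -
  have sy: "L$i$j = L$j$i" for i j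
    using arg_cong[OF symm, of "\<lambda>M. M$i$j"] by (simp add: transpose_def)
  have ev: "(\<Sum>i\<in>UNIV. L$j$i * p$i) = l * p$j" for j
    using arg_cong[OF eigen, of "\<lambda>w. w$j"] by (simp add: matrix_vector_mult_def)
  have evc: "(\<Sum>i\<in>UNIV. complex_of_real (p$i) * complex_of_real (L$j$i)) = complex_of_real l * complex_of_real (p$j)" for j
    using arg_cong[OF ev[of j], of complex_of_real] by (simp add: mult.commute)
  have "cinner_real (cmatvec L v) p = (\<Sum>i\<in>UNIV. \<Sum>j\<in>UNIV. v$j * complex_of_real (L$i$j * p$i))"
    by (simp add: cinner_real_def cmatvec_def sum_distrib_left mult_ac)
  also have "\<dots> = (\<Sum>j\<in>UNIV. v$j * complex_of_real (\<Sum>i\<in>UNIV. L$j$i * p$i))"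
    by (subst sum.swap) (simp add: sum_distrib_left sy)
  also have "\<dots> = l * cinner_real v p"
    by (simp add: evc cinner_real_def sum_distrib_left[symmetric] mult_ac)
  finally show ?thesis .
qed

lemma coef_lin: "cinner_real (a *s u + w) p = a * cinner_real u p + cinner_real w p"
  by (simp add: cinner_real_def sum.distrib sum_distrib_left algebra_simps)

lemma norm_vsmult: "norm (a *s (v :: complex^'n)) = cmod a * norm v"
  unfolding norm_vec_def by (simp add: norm_mult L2_set_right_distrib)

lemma coef_add: "cinner_real (u + w) p = cinner_real u p + cinner_real w p"
  by (simp add: cinner_real_def sum.distrib algebra_simps)

lemma coef_smult: "cinner_real (a *s u) p = a * cinner_real u p"
  by (simp add: cinner_real_def sum_distrib_left algebra_simps)

theorem theorem1:
  fixes L :: "real^'n^'n" and \<rho> :: real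
    and phi :: "'n \<Rightarrow> real^'n" and lam :: "'n \<Rightarrow> real"
    and \<psi> \<phi> c :: complex and x :: "complex^'n"
    and y z :: "nat \<Rightarrow> complex^'n"
  assumes symm: "transpose L = L"
    and norm_bound: "onorm (\<lambda>v. L *v v) \<le> \<rho>"
    and orthonormal: "\<And>i j. phi i \<bullet> phi j = (if i = j then 1 else 0)"
    and eigen: "\<And>i. L *v phi i = lam i *\<^sub>R phi i"
    and psi_nz: "\<psi> \<noteq> 0"
    and rec_y: "\<And>t. y (Suc t) = \<psi> *s cmatvec L (y t) + \<phi> *s x"
    and rec_z: "\<And>t. z (Suc t) = y (Suc t) + c *s x"
    and pole: "cmod (1 / \<psi>) > \<rho>"
  shows "let r = - \<phi> / \<psi>; p = 1 / \<psi>;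
             lim = (\<Sum>n\<in>UNIV. (arma1_H c r p (lam n) * cinner_real x (phi n)) *s cvec (phi n))
         in z \<longlonglongrightarrow> lim \<and>
            (\<exists>C q. 0 \<le> q \<and> q < 1 \<and> (\<forall>t. norm (z t - lim) \<le> C * q ^ t))"
proof -
  define r where "r = - \<phi> / \<psi>"
  define p where "p = 1 / \<psi>"
  define lim where "lim = (\<Sum>n\<in>UNIV. (arma1_H c r p (lam n) * cinner_real x (phi n)) *s cvec (phi n))"
  have bl: "bounded_linear (\<lambda>v. L *v v)" by simp
  have rho0: "0 \<le> \<rho>" using onorm_pos_le[OF bl] norm_bound by linarith
  have lam_le: "\<bar>lam n\<bar> \<le> \<rho>" for n
  proof -
    have n1: "norm (phi n) = 1" using orthonormal[of n n] by (simp add: norm_eq_1)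
    have "norm (L *v phi n) \<le> onorm (\<lambda>v. L *v v) * norm (phi n)" by (rule onorm[OF bl])
    thus ?thesis using n1 eigen[of n] norm_bound by simp
  qed
  have ppos: "cmod \<psi> > 0" using psi_nz by simp
  have prho: "cmod \<psi> * \<rho> < 1"
    using pole ppos by (simp add: norm_divide field_simps)
  define q where "q = (1 + cmod \<psi> * \<rho>) / 2"
  have nn: "0 \<le> cmod \<psi> * \<rho>" using rho0 by simp
  have q0: "0 < q" and q1: "q < 1" using prho nn unfolding q_def by auto
  have mu_le: "cmod (\<psi> * complex_of_real (lam n)) \<le> q" for n
  proof -
    have "cmod (\<psi> * complex_of_real (lam n)) = cmod \<psi> * \<bar>lam n\<bar>" by (simp add: norm_mult)
    also have "\<dots> \<le> cmod \<psi> * \<rho>" using lam_le[of n] ppos by (simp add: mult_left_mono)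
    finally show ?thesis using prho by (simp add: q_def)
  qed
  have mu_ne: "1 - \<psi> * complex_of_real (lam n) \<noteq> 0" for n
    using mu_le[of n] q1 by auto
  define xn where "xn n = cinner_real x (phi n)" for n
  define as where "as n = \<phi> * xn n / (1 - \<psi> * complex_of_real (lam n))" for n
  define e where "e n t = cinner_real (y t) (phi n) - as n" for n t
  have e_step: "e n (Suc t) = (\<psi> * complex_of_real (lam n)) * e n t" for n t
  proof -
    have "cinner_real (y (Suc t)) (phi n) = \<psi> * (complex_of_real (lam n) * cinner_real (y t) (phi n)) + \<phi> * xn n"
      by (simp add: rec_y coef_add coef_smult coef_L[OF symm eigen] xn_def)
    moreover have "as n * (1 - \<psi> * complex_of_real (lam n)) = \<phi> * xn n"
      using mu_ne[of n] by (simp add: as_def)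
    ultimately show ?thesis unfolding e_def by (simp add: algebra_simps)
  qed
  have e_pow: "e n t = (\<psi> * complex_of_real (lam n)) ^ t * e n 0" for n t
    by (induction t) (simp_all add: e_step)
  have H_eq: "arma1_H c r p (lam n) * xn n = c * xn n + as n" for n
  proof -
    have ne: "complex_of_real (lam n) - 1 / \<psi> \<noteq> 0"
      using mu_ne[of n] psi_nz by (auto simp: field_simps)
    have "r / (complex_of_real (lam n) - p) = \<phi> / (1 - \<psi> * complex_of_real (lam n))"
      using ne mu_ne[of n] psi_nz unfolding r_def p_def by (simp add: field_simps)
    thus ?thesis unfolding arma1_H_def as_def by (simp add: algebra_simps)
  qed
  have err: "z (Suc t) - lim = (\<Sum>n\<in>UNIV. e n (Suc t) *s cvec (phi n))" for t
  proof -
    have "z (Suc t) = (\<Sum>n\<in>UNIV. cinner_real (z (Suc t)) (phi n) *s cvec (phi n))"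
      by (rule recon[OF orthonormal])
    also have "\<dots> = (\<Sum>n\<in>UNIV. (cinner_real (y (Suc t)) (phi n) + c * xn n) *s cvec (phi n))"
      by (simp add: rec_z coef_add coef_smult xn_def)
    finally have zz: "z (Suc t) = \<dots>" .
    have "lim = (\<Sum>n\<in>UNIV. (c * xn n + as n) *s cvec (phi n))"
      unfolding lim_def using H_eq by (simp add: xn_def)
    with zz show ?thesis
      by (simp add: e_def sum_subtractf[symmetric] vector_sub_rdistrib)
  qed
  define C where "C = norm (z 0 - lim) + (\<Sum>n\<in>UNIV. cmod (e n 0) * norm (cvec (phi n)))"
  have bound: "norm (z t - lim) \<le> C * q ^ t" for t
  proof (cases t)
    case 0
    have "0 \<le> (\<Sum>n\<in>UNIV. cmod (e n 0) * norm (cvec (phi n)))" by (simp add: sum_nonneg)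
    thus ?thesis using 0 by (simp add: C_def)
  next
    case (Suc s)
    have "norm (z t - lim) \<le> (\<Sum>n\<in>UNIV. norm (e n t *s cvec (phi n)))"
      unfolding Suc err by (rule norm_sum)
    also have "\<dots> = (\<Sum>n\<in>UNIV. cmod (\<psi> * complex_of_real (lam n)) ^ t * (cmod (e n 0) * norm (cvec (phi n))))"
      by (simp add: norm_vsmult e_pow[of _ t] norm_mult norm_power mult_ac)
    also have "\<dots> \<le> (\<Sum>n\<in>UNIV. q ^ t * (cmod (e n 0) * norm (cvec (phi n))))"
      by (intro sum_mono mult_right_mono power_mono mu_le) auto
    also have "\<dots> \<le> C * q ^ t"
      by (simp add: C_def sum_distrib_left[symmetric] mult_ac q0 less_imp_le)
    finally show ?thesis .
  qed
  have conv: "z \<longlonglongrightarrow> lim"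
  proof -
    have "(\<lambda>t. C * q ^ t) \<longlonglongrightarrow> C * 0"
      by (intro tendsto_mult tendsto_const LIMSEQ_power_zero) (use q0 q1 in auto)
    hence "(\<lambda>t. C * q ^ t) \<longlonglongrightarrow> 0" by simp
    hence "(\<lambda>t. z t - lim) \<longlonglongrightarrow> 0"
      by (rule Lim_null_comparison[rotated]) (simp add: bound)
    thus ?thesis by (simp add: LIM_zero_cancel)
  qed
  show ?thesis
    unfolding Let_def r_def[symmetric] p_def[symmetric] lim_def[symmetric]
    using conv bound q0 q1 by (intro conjI exI[of _ C] exI[of _ q]) auto
qed

end
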